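(* Let $k\ge2$ and let $G=F_k$ be the free group of rank $k$, presented as $G=\langle S_{2k}\mid K\rangle$ with $S_{2k}=\{s_1,\dots,s_{2k}\}$ and $K(s_i,s_j)=0$ if and only if $|i-j|=k$. Let $\mathcal{A}$ be a finite alphabet with $|\mathcal{A}|\le 2k-1$, let $A_1,\dots,A_k$ be $\{0,1\}$-matrices indexed by $\mathcal{A}$, and let $X=X_{\mathbf{A},\mathbf{A}^t}$ be the Markov tree shift on $F_k$ given by the $2k$-tuple $(A_1,\dots,A_k,A_1^t,\dots,A_k^t)$. Then the topological entropy $\lim_{n\to\infty}\log p_n/|\Delta_n|$ of $X$ exists and equals $h^{(s)}(X)$.
   Context: For a $\{0,1\}$-matrix $K$ indexed by generators $S=\{s_1,\dots,s_N\}$, $\langle S\mid K\rangle$ is the semigroup generated by $S$ with relations $s_is_j=1_G$ iff $K(s_i,s_j)=0$; here this is $F_k$ with $s_{i+k}=s_i^{-1}$. Every $g$ has a unique minimal (reduced) word $g=g_1\cdots g_n$, $|g|=n$. $\Delta_n=\{h\in G:|h|\le n\}$ and $\bar{\Delta}^{(g)}_n=\{gh:|h|\le n,\ |gh|=|g|+|h|\}$. A pattern $u:H\to\mathcal{A}$ ($H$ finite) is accepted by $t\in\mathcal{A}^G$ if there is $g$ with $t_{gh}=u_h$ for all $h\in H$; $p_n$ (resp. $p^{(g)}_n$) is the number of patterns on $\Delta_n$ (resp. $\bar{\Delta}^{(g)}_n$) accepted by some $t\in X$. For an $N$-tuple $(B_1,\dots,B_N)$ of $\{0,1\}$-matrices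 indexed by $\mathcal{A}$ the Markov tree shift is $\{t\in\mathcal{A}^G: B_i(t_g,t_{gs_i})=1 \text{ whenever } |gs_i|=|g|+1\}$. $A^t$ is the transpose. The $i$th stem entropy is $h^{(s_i)}(X)=\limsup_n\log p^{(s_i)}_n/|\bar{\Delta}^{(s_i)}_n|$; these coincide (as $K$ is primitive for $k\ge2$) and $h^{(s)}(X)$ is their common value. *)

theory Defs
  imports "HOL-Analysis.Analysis"
begin

text \<open>Free group F_k = <S_2k | K>, generators s_1..s_2k encoded as 0..2k-1,
  with s_(i+k) = s_i^(-1), i.e. inverse of generator i is (i + k) mod 2k.
  Group elements are represented by their unique reduced words (lists of generators).\<close>

definition ginv :: "nat \<Rightarrow> nat \<Rightarrow> nat" where
  "ginv k i = (i + k) mod (2 * k)"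

definition Kmat :: "nat \<Rightarrow> nat \<Rightarrow> nat \<Rightarrow> bool" where
  "Kmat k i j \<longleftrightarrow> \<not> (i + k = j \<or> j + k = i)"

definition reduced :: "nat \<Rightarrow> nat list \<Rightarrow> bool" where
  "reduced k w \<longleftrightarrow> (\<forall>a\<in>set w. a < 2 * k) \<and>
     (\<forall>j. Suc j < length w \<longrightarrow> Kmat k (w ! j) (w ! Suc j))"

definition FG :: "nat \<Rightarrow> nat list set" where
  "FG k = {w. reduced k w}"

text \<open>Product of reduced words: cancel the end of u against the start of v.
  First argument is u reversed.\<close>
fun gmult_rev :: "nat \<Rightarrow> nat list \<Rightarrow> nat list \<Rightarrow> nat list" where
  "gmult_rev k [] v = v"
| "gmult_rev k (a # ru) [] = rev (a # ru)"
| "gmult_rev k (a # ru) (b # v) =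
     (if \<not> Kmat k a b then gmult_rev k ru v else rev (a # ru) @ b # v)"

definition gmult :: "nat \<Rightarrow> nat list \<Rightarrow> nat list \<Rightarrow> nat list" where
  "gmult k u v = gmult_rev k (rev u) v"

definition Delta :: "nat \<Rightarrow> nat \<Rightarrow> nat list set" where
  "Delta k n = {h \<in> FG k. length h \<le> n}"

definition DeltaBar :: "nat \<Rightarrow> nat list \<Rightarrow> nat \<Rightarrow> nat list set" where
  "DeltaBar k g n = {gmult k g h | h. h \<in> FG k \<and> length h \<le> n \<and>
                      length (gmult k g h) = length g + length h}"

definition npat :: "nat \<Rightarrow> (nat list \<Rightarrow> 'a) set \<Rightarrow> nat list set \<Rightarrow> nat" where
  "npat k X H = card {restrict (\<lambda>h. t (gmult k g h)) H | g t. g \<in> FG k \<and> t \<in> X}"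

definition markov_tree_shift ::
  "nat \<Rightarrow> (nat \<Rightarrow> 'a \<Rightarrow> 'a \<Rightarrow> bool) \<Rightarrow> (nat list \<Rightarrow> 'a) set" where
  "markov_tree_shift k B = {t. \<forall>g\<in>FG k. \<forall>i<2 * k.
      length (gmult k g [i]) = length g + 1 \<longrightarrow> B i (t g) (t (gmult k g [i]))}"

definition AAt :: "nat \<Rightarrow> (nat \<Rightarrow> 'a \<Rightarrow> 'a \<Rightarrow> bool) \<Rightarrow> nat \<Rightarrow> 'a \<Rightarrow> 'a \<Rightarrow> bool" where
  "AAt k A i = (if i < k then A i else (\<lambda>a b. A (i - k) b a))"

definition stem_entropy :: "nat \<Rightarrow> (nat list \<Rightarrow> 'a) set \<Rightarrow> nat \<Rightarrow> ereal" where
  "stem_entropy k X i = limsup (\<lambda>n. ereal (ln (real (npat k X (DeltaBar k [i] n)))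
                                       / real (card (DeltaBar k [i] n))))"

end

theory Submission
  imports Defs
begin

lemma limsup_le0_aux:
  fixes x \<delta> :: "nat \<Rightarrow> real"
  assumes q: "0 \<le> q" "q < 1" and d: "\<delta> \<longlonglongrightarrow> 0" and B: "\<And>n. \<bar>x n\<bar> \<le> B"
    and rec: "\<And>n. x (n+2) \<le> \<delta> n + q * x n" and e: "\<epsilon> > 0"
  shows "eventually (\<lambda>n. x n \<le> \<epsilon>) sequentially"
proof -
  have B0: "0 \<le> B" using B[of 0] by linarith
  have "eventually (\<lambda>n. \<bar>\<delta> n\<bar> < \<epsilon> * (1 - q) / 2) sequentially"
    using d e q by (intro order_tendstoD(2)[OF tendsto_rabs_zero[OF d]]) simp
  then obtain N where N: "\<And>n. n \<ge> N \<Longrightarrow> \<bar>\<delta> n\<bar> < \<epsilon> * (1 - q) / 2"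
    unfolding eventually_sequentially by blast
  have main: "x (N + m) \<le> \<epsilon>/2 + B * q ^ (m div 2)" for m
  proof (induction m rule: less_induct)
    case (less m)
    show ?case
    proof (cases "m < 2")
      case True
      then have "m div 2 = 0" by simp
      then show ?thesis using B[of "N+m"] e by simp
    next
      case False
      define m' where "m' = m - 2"
      have m: "m = m' + 2" using False by (simp add: m'_def)
      have IH: "x (N + m') \<le> \<epsilon>/2 + B * q ^ (m' div 2)" using less m by simp
      have "x (N + m) = x ((N + m') + 2)" using m by (simp add: add.assoc)
      also have "\<dots> \<le> \<delta> (N + m') + q * x (N + m')" by (rule rec)
      also have "\<dots> \<le> \<epsilon> * (1 - q) / 2 + q * (\<epsilon>/2 + B * q ^ (m' div 2))"
        using N[of "N+m'"] IH q by (intro add_mono mult_left_mono) auto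
      also have "\<dots> = \<epsilon>/2 + B * q ^ (m div 2)" using m by (simp add: field_simps)
      finally show ?thesis .
    qed
  qed
  have "(\<lambda>M. B * q ^ M) \<longlonglongrightarrow> B * 0" using q by (intro tendsto_mult tendsto_const LIMSEQ_power_zero) auto
  then have "eventually (\<lambda>M. B * q ^ M < \<epsilon>/2) sequentially" using e by (intro order_tendstoD(2)) auto
  then obtain M where M: "B * q ^ M < \<epsilon>/2" unfolding eventually_sequentially by blast
  show ?thesis unfolding eventually_sequentially
  proof (intro exI[of _ "N + 2*M"] allI impI)
    fix n assume n: "N + 2*M \<le> n"
    define m where "m = n - N"
    have nm: "n = N + m" and mM: "2*M \<le> m" using n by (simp_all add: m_def)
    have "q ^ (m div 2) \<le> q ^ M" using mM q by (intro power_decreasing) auto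
    then have "B * q ^ (m div 2) \<le> B * q ^ M" using B0 by (intro mult_left_mono)
    then show "x n \<le> \<epsilon>" using main[of m] nm M by simp
  qed
qed


lemma sum_minus1:
  fixes f :: "nat \<Rightarrow> real"
  assumes "a < K" shows "(\<Sum>j\<in>{..<K}-{a}. f j) = (\<Sum>j<K. f j) - f a"
  using assms by (simp add: sum_diff1)

lemma stems_conv:
  fixes s :: "nat \<Rightarrow> nat \<Rightarrow> real" and gi :: "nat \<Rightarrow> nat" and K :: nat
  assumes K: "K \<ge> 3"
    and gi: "\<And>i. i < K \<Longrightarrow> gi i < K" "\<And>i. i < K \<Longrightarrow> gi (gi i) = i"
    and la: "0 \<le> la" and s0: "\<And>j n. j < K \<Longrightarrow> 0 \<le> s j n"
    and H1: "\<And>i n. i < K \<Longrightarrow> s i (Suc n) \<le> la + (\<Sum>j\<in>{..<K}-{gi i}. s j n)"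
  shows "\<exists>\<beta>. \<forall>i<K. (\<lambda>n. s i n / (real K - 1) ^ n) \<longlonglongrightarrow> \<beta>"
proof -
  define d where "d = real K - 1"
  have d2: "d \<ge> 2" using K by (simp add: d_def)
  define c where "c = la / (d - 1)"
  have c0: "c \<ge> 0" using la d2 by (simp add: c_def)
  have lac: "la + c = (real K - 1) * c" using d2 by (simp add: c_def d_def field_simps)
  define V where "V i n = s i n + c" for i n
  define U where "U n = (\<Sum>i<K. V i n)" for n
  have V0: "0 \<le> V i n" if "i < K" for i n using s0[OF that] c0 by (simp add: V_def)
  have VU: "V i n \<le> U n" if "i < K" for i n
    unfolding U_def using V0 that by (intro member_le_sum) auto
  have inj: "inj_on gi {..<K}" by (metis gi(2) inj_onI lessThan_iff)
  have img: "gi ` {..<K} = {..<K}"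
    using gi by (auto simp: image_iff) (metis lessThan_iff)
  have reidx: "(\<Sum>i<K. f (gi i)) = (\<Sum>i<K. f i)" for f :: "nat \<Rightarrow> real"
    using sum.reindex[OF inj, of f] img by simp
  have a: "V i (Suc n) \<le> U n - V (gi i) n" if i: "i < K" for i n
  proof -
    have "V i (Suc n) \<le> la + (\<Sum>j\<in>{..<K}-{gi i}. s j n) + c" using H1[OF i] by (simp add: V_def)
    also have "\<dots> = (\<Sum>j<K. s j n) - s (gi i) n + la + c" using sum_minus1[OF gi(1)[OF i]] by simp
    also have "\<dots> = (\<Sum>j<K. s j n) - s (gi i) n + (real K - 1) * c" using lac by simp
    also have "\<dots> = U n - V (gi i) n" by (simp add: U_def V_def sum.distrib algebra_simps)
    finally show ?thesis .
  qed
  have b: "U (Suc n) \<le> d * U n" for n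
  proof -
    have "U (Suc n) \<le> (\<Sum>i<K. U n - V (gi i) n)" unfolding U_def[of "Suc n"] by (intro sum_mono a) auto
    also have "\<dots> = real K * U n - U n" by (simp add: sum_subtractf reidx[of "\<lambda>j. V j n"] U_def)
    finally show ?thesis by (simp add: d_def algebra_simps)
  qed
  have cc: "V i (Suc (Suc n)) \<le> (real K - 2) * U n + V i n" if i: "i < K" for i n
  proof -
    have "V i (Suc (Suc n)) \<le> U (Suc n) - V (gi i) (Suc n)" by (rule a[OF i])
    also have "\<dots> = (\<Sum>j\<in>{..<K}-{gi i}. V j (Suc n))" unfolding U_def using sum_minus1[OF gi(1)[OF i]] by simp
    also have "\<dots> \<le> (\<Sum>j\<in>{..<K}-{gi i}. U n - V (gi j) n)" by (intro sum_mono a) auto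
    also have "\<dots> = (\<Sum>j<K. U n - V (gi j) n) - (U n - V (gi (gi i)) n)"
      by (rule sum_minus1[OF gi(1)[OF i]])
    also have "\<dots> = real K * U n - U n - (U n - V i n)"
      using gi(2)[OF i] by (simp add: sum_subtractf reidx[of "\<lambda>j. V j n"] U_def)
    finally show ?thesis by (simp add: algebra_simps)
  qed
  define u where "u n = U n / d ^ n" for n
  define w where "w i n = V i n / d ^ n" for i n
  have dpos: "0 < d ^ n" for n using d2 by simp
  have u0: "0 \<le> u n" for n unfolding u_def U_def using V0 by (intro divide_nonneg_pos sum_nonneg dpos) auto
  have udec: "decseq u"
  proof (rule decseq_SucI)
    fix n
    have "U (Suc n) / d ^ Suc n \<le> d * U n / d ^ Suc n" using b[of n] dpos[of "Suc n"] by (intro divide_right_mono) auto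
    then show "u (Suc n) \<le> u n" using d2 by (simp add: u_def)
  qed
  obtain lam where lam: "u \<longlonglongrightarrow> lam" and laml: "\<And>n. lam \<le> u n"
    using decseq_convergent[OF udec, of 0] u0 by blast
  have lam0: "0 \<le> lam" using lam u0 by (intro LIMSEQ_le_const) auto
  have w0: "0 \<le> w i n" and wu: "w i n \<le> u n" if "i < K" for i n
    using V0[OF that] VU[OF that] dpos[of n] by (auto simp: w_def u_def intro: divide_right_mono)
  have wsum: "u n = (\<Sum>i<K. w i n)" for n by (simp add: u_def w_def U_def sum_divide_distrib)
  have upper: "eventually (\<lambda>n. w i n \<le> lam / K + \<epsilon>) sequentially" if i: "i < K" and e: "\<epsilon> > 0" for i \<epsilon>
  proof -
    define x where "x n = w i n - lam / K" for n
    define \<delta> where "\<delta> n = (real K - 2) / d^2 * (u n - lam)" for n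
    have "\<delta> \<longlonglongrightarrow> (real K - 2) / d^2 * (lam - lam)" unfolding \<delta>_def by (intro tendsto_intros lam)
    then have dl: "\<delta> \<longlonglongrightarrow> 0" by simp
    have xB: "\<bar>x n\<bar> \<le> u 0 + lam / K" for n
    proof -
      have "u n \<le> u 0" using udec by (simp add: decseq_def)
      moreover have "0 \<le> lam / real K" using lam0 by simp
      ultimately show ?thesis using w0[OF i, of n] wu[OF i, of n] unfolding x_def abs_le_iff by linarith
    qed
    have rec: "x (n+2) \<le> \<delta> n + (1/d^2) * x n" for n
    proof -
      have "V i (Suc (Suc n)) / d^(n+2) \<le> ((real K - 2) * U n + V i n) / d^(n+2)"
        using cc[OF i, of n] dpos[of "n+2"] by (intro divide_right_mono) auto
      moreover have "(real K - 2) / d^2 * u n + w i n / d^2 = ((real K - 2) * U n + V i n) / d^(n+2)"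
        using d2 by (simp add: w_def u_def power_add field_simps power2_eq_square)
      ultimately have "w i (n+2) \<le> (real K - 2) / d^2 * u n + w i n / d^2"
        by (simp add: w_def)
      moreover have "(real K - 2) / d^2 * lam + lam / K / d^2 = lam / K"
      proof -
        have dd: "d^2 = real K * (real K - 2) + 1" by (simp add: d_def power2_eq_square algebra_simps)
        have "(real K - 2) / d^2 * lam + lam / K / d^2 = lam * (real K * (real K - 2) + 1) / (real K * d^2)"
          using K d2 by (simp add: field_simps)
        also have "\<dots> = lam / K" unfolding dd[symmetric] using d2 K by (simp add: field_simps)
        finally show ?thesis .
      qed
      moreover have "\<delta> n + (1/d^2) * x n = (real K - 2) / d^2 * u n + w i n / d^2 - ((real K - 2) / d^2 * lam + lam / K / d^2)"
        unfolding \<delta>_def x_def using d2 K by (simp add: field_simps)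
      ultimately show ?thesis unfolding x_def by linarith
    qed
    have "eventually (\<lambda>n. x n \<le> \<epsilon>) sequentially"
      by (rule limsup_le0_aux[OF _ _ dl xB rec e]) (use d2 in \<open>auto simp: field_simps\<close>)
    then show ?thesis by (rule eventually_mono) (simp add: x_def)
  qed
  have conv: "(\<lambda>n. w i n) \<longlonglongrightarrow> lam / K" if i: "i < K" for i
  proof (rule tendstoI)
    fix \<epsilon> :: real assume e: "\<epsilon> > 0"
    define e' where "e' = \<epsilon> / K"
    have e': "e' > 0" using e K by (simp add: e'_def)
    have "eventually (\<lambda>n. \<forall>j\<in>{..<K}. w j n \<le> lam / K + e') sequentially"
      using upper e' by (intro eventually_ball_finite) auto
    then show "eventually (\<lambda>n. dist (w i n) (lam / K) < \<epsilon>) sequentially"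
    proof (rule eventually_mono)
      fix n assume all: "\<forall>j\<in>{..<K}. w j n \<le> lam / K + e'"
      have "w i n = u n - (\<Sum>j\<in>{..<K}-{i}. w j n)" using sum_minus1[OF i] wsum by simp
      also have "\<dots> \<ge> lam - (\<Sum>j\<in>{..<K}-{i}. lam / K + e')"
        using laml[of n] all by (intro diff_mono sum_mono) auto
      finally have lo: "w i n \<ge> lam - (real K - 1) * (lam / K + e')" using i by simp
      have "lam - (real K - 1) * (lam / K + e') = lam / K - (real K - 1) * e'"
        using K by (simp add: field_simps)
      then have "w i n \<ge> lam / K - (real K - 1) * e'" using lo by simp
      moreover have "(real K - 1) * e' < \<epsilon>" using e K by (simp add: e'_def field_simps)
      moreover have "e' < \<epsilon>" using e K by (simp add: e'_def field_simps)
      moreover have "w i n \<le> lam / K + e'" using all i by auto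
      ultimately show "dist (w i n) (lam / K) < \<epsilon>" unfolding dist_real_def abs_less_iff by linarith
    qed
  qed
  have cd: "(\<lambda>n. c * inverse (d ^ n)) \<longlonglongrightarrow> c * 0" using d2 by (intro tendsto_intros LIMSEQ_inverse_realpow_zero) auto
  show ?thesis
  proof (intro exI allI impI)
    fix i assume i: "i < K"
    have "(\<lambda>n. w i n - c * inverse (d ^ n)) \<longlonglongrightarrow> lam / K - c * 0" by (intro tendsto_intros conv[OF i] cd)
    moreover have "w i n - c * inverse (d ^ n) = s i n / (real K - 1) ^ n" for n
      using dpos[of n] by (simp add: w_def V_def d_def field_simps add_divide_distrib)
    ultimately show "(\<lambda>n. s i n / (real K - 1) ^ n) \<longlonglongrightarrow> lam / K" by simp
  qed
qed


lemma ball_conv: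
  fixes s :: "nat \<Rightarrow> nat \<Rightarrow> real" and p :: "nat \<Rightarrow> real" and gi :: "nat \<Rightarrow> nat" and K :: nat
  assumes K: "K \<ge> 3" and gi: "\<And>i. i < K \<Longrightarrow> gi i < K"
    and st: "\<And>i. i < K \<Longrightarrow> (\<lambda>n. s i n / (real K - 1) ^ n) \<longlonglongrightarrow> \<beta>"
    and H2: "\<And>n. p (Suc n) \<le> la + (\<Sum>j<K. s j n)"
    and H3: "\<And>n. \<exists>i i'. i < K \<and> i' < K \<and> gi i \<noteq> gi i' \<and>
        s i (Suc n) + s i' (Suc n) \<le> 2 * la + p (Suc n) + (\<Sum>j\<in>{..<K}-{gi i, gi i'}. s j n)"
  shows "(\<lambda>n. p (Suc n) / (real K - 1) ^ n) \<longlonglongrightarrow> real K * \<beta>"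
proof -
  define d where "d = real K - 1"
  have d2: "d \<ge> 2" using K by (simp add: d_def)
  have dpos: "0 < d ^ n" for n using d2 by simp
  define \<delta> where "\<delta> n = (\<Sum>j<K. \<bar>s j n / d ^ n - \<beta>\<bar>)" for n
  define T where "T n = (\<Sum>j<K. s j n) / d ^ n" for n
  have st': "(\<lambda>n. s i n / d ^ n) \<longlonglongrightarrow> \<beta>" if "i < K" for i using st[OF that] by (simp add: d_def)
  have \<delta>0: "\<delta> \<longlonglongrightarrow> 0"
  proof -
    have "\<delta> \<longlonglongrightarrow> (\<Sum>j<K. \<bar>\<beta> - \<beta>\<bar>)" unfolding \<delta>_def
      by (intro tendsto_sum tendsto_rabs tendsto_diff st' tendsto_const) auto
    then show ?thesis by simp
  qed
  have T: "T \<longlonglongrightarrow> (\<Sum>j<K. \<beta>)" unfolding T_def sum_divide_distrib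
    by (intro tendsto_sum st') auto
  have ld: "(\<lambda>n. la / d ^ n) \<longlonglongrightarrow> 0"
  proof -
    have "(\<lambda>n. la * inverse (d ^ n)) \<longlonglongrightarrow> la * 0" using d2 by (intro tendsto_intros LIMSEQ_inverse_realpow_zero) auto
    then show ?thesis by (simp add: divide_inverse)
  qed
  have lowb: "d ^ n * (\<beta> - \<delta> n) \<le> s j n" if "j < K" for j n
  proof -
    have "\<bar>s j n / d ^ n - \<beta>\<bar> \<le> \<delta> n" unfolding \<delta>_def using that by (intro member_le_sum) auto
    then have "\<beta> - \<delta> n \<le> s j n / d ^ n" by linarith
    then show ?thesis using dpos[of n] by (simp add: pos_le_divide_eq mult.commute)
  qed
  define lo where "lo n = 2 * d * (\<beta> - \<delta> (Suc n)) + 2 * (\<beta> - \<delta> n) - 2 * (la / d ^ n) - T n" for n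
  define up where "up n = la / d ^ n + T n" for n
  have "lo \<longlonglongrightarrow> 2 * d * (\<beta> - 0) + 2 * (\<beta> - 0) - 2 * 0 - (\<Sum>j<K. \<beta>)"
    unfolding lo_def by (intro tendsto_intros \<delta>0 ld T LIMSEQ_Suc[OF \<delta>0])
  moreover have "2 * d * (\<beta> - 0) + 2 * (\<beta> - 0) - 2 * 0 - (\<Sum>j<K. \<beta>) = real K * \<beta>"
    by (simp add: d_def algebra_simps)
  ultimately have lo: "lo \<longlonglongrightarrow> real K * \<beta>" by (simp only:)
  have "up \<longlonglongrightarrow> 0 + (\<Sum>j<K. \<beta>)" unfolding up_def by (intro tendsto_intros ld T)
  then have up: "up \<longlonglongrightarrow> real K * \<beta>" by simp
  have le_up: "p (Suc n) / d ^ n \<le> up n" for n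
  proof -
    have "p (Suc n) / d ^ n \<le> (la + (\<Sum>j<K. s j n)) / d ^ n" using H2[of n] dpos[of n] by (intro divide_right_mono) auto
    then show ?thesis by (simp add: up_def T_def add_divide_distrib)
  qed
  have le_lo: "lo n \<le> p (Suc n) / d ^ n" for n
  proof -
    obtain i i' where ii: "i < K" "i' < K" "gi i \<noteq> gi i'"
      and h: "s i (Suc n) + s i' (Suc n) \<le> 2 * la + p (Suc n) + (\<Sum>j\<in>{..<K}-{gi i, gi i'}. s j n)"
      using H3[of n] by blast
    have g: "gi i < K" "gi i' < K" using gi ii by auto
    have "{..<K}-{gi i, gi i'} = ({..<K}-{gi i}) - {gi i'}" by auto
    then have sr: "(\<Sum>j\<in>{..<K}-{gi i, gi i'}. s j n) = (\<Sum>j<K. s j n) - s (gi i) n - s (gi i') n"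
      using g ii(3) by (simp add: sum_diff1)
    define D where "D = d ^ n"
    have D: "0 < D" using dpos by (simp add: D_def)
    have dS: "d ^ Suc n = d * D" by (simp add: D_def)
    have f1: "d * D * (\<beta> - \<delta> (Suc n)) \<le> s i (Suc n)" using lowb[OF ii(1), of "Suc n"] by (simp add: D_def)
    have f2: "d * D * (\<beta> - \<delta> (Suc n)) \<le> s i' (Suc n)" using lowb[OF ii(2), of "Suc n"] by (simp add: D_def)
    have f3: "D * (\<beta> - \<delta> n) \<le> s (gi i) n" using lowb[OF g(1), of n] by (simp add: D_def)
    have f4: "D * (\<beta> - \<delta> n) \<le> s (gi i') n" using lowb[OF g(2), of n] by (simp add: D_def)
    have TD: "T n * D = (\<Sum>j<K. s j n)" using D d2 by (simp add: T_def D_def)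
    have main: "2 * (d * D * (\<beta> - \<delta> (Suc n))) + 2 * (D * (\<beta> - \<delta> n)) - 2 * la - T n * D \<le> p (Suc n)"
      using f1 f2 f3 f4 h sr TD by linarith
    have "lo n * D = 2 * (d * D * (\<beta> - \<delta> (Suc n))) + 2 * (D * (\<beta> - \<delta> n)) - 2 * la - T n * D"
      unfolding lo_def D_def[symmetric] using D by (simp add: algebra_simps)
    then have "lo n * D \<le> p (Suc n)" using main by simp
    then show ?thesis using D by (simp add: D_def pos_le_divide_eq)
  qed
  have "(\<lambda>n. p (Suc n) / d ^ n) \<longlonglongrightarrow> real K * \<beta>"
    by (rule tendsto_sandwich[OF _ _ lo up]) (simp_all add: le_lo le_up)
  then show ?thesis by (simp add: d_def)
qed

lemma reduced_Nil[simp]: "reduced k []" by (simp add: reduced_def)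

lemma reduced_Cons: "reduced k (x # xs) \<longleftrightarrow>
   x < 2 * k \<and> reduced k xs \<and> (xs \<noteq> [] \<longrightarrow> Kmat k x (hd xs))"
  unfolding reduced_def
  apply (cases xs)
   apply simp
  apply (auto simp: nth_Cons split: nat.splits)
  done

lemma reduced_snoc: "reduced k (xs @ [i]) \<longleftrightarrow>
   reduced k xs \<and> i < 2 * k \<and> (xs \<noteq> [] \<longrightarrow> Kmat k (last xs) i)"
  by (induction xs) (auto simp: reduced_Cons hd_append)

lemma gmult_Nil[simp]: "gmult k [] h = h" by (simp add: gmult_def)

lemma gmult_rev_Nil2[simp]: "gmult_rev k ru [] = rev ru"
  by (cases ru) auto

lemma gmult_gen: "gmult k g [i] = (if g \<noteq> [] \<and> \<not> Kmat k (last g) i then butlast g else g @ [i])"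
proof (cases g rule: rev_cases)
  case Nil then show ?thesis by (simp add: gmult_def)
next
  case (snoc ys y) then show ?thesis by (simp add: gmult_def)
qed

lemma gmult_single: "gmult k [a] h = (case h of [] \<Rightarrow> [a] | c # h' \<Rightarrow> if Kmat k a c then a # h else h')"
  unfolding gmult_def by (cases h) auto

lemma gmult_rev_snoc: "reduced k (a # rev ru) \<Longrightarrow> gmult_rev k (ru @ [a]) v = gmult k [a] (gmult_rev k ru v)"
proof (induction ru arbitrary: v)
  case Nil then show ?case by (simp add: gmult_def)
next
  case (Cons b ru)
  have r: "reduced k (a # rev ru)" using Cons.prems reduced_snoc[of k "a # rev ru" b] by simp
  have K: "Kmat k a (hd (rev ru @ [b]))" using Cons.prems by (simp add: reduced_Cons)
  show ?case
  proof (cases v)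
    case Nil then show ?thesis using K by (cases "rev ru @ [b]") (auto simp: gmult_single)
  next
    case (Cons c v')
    then show ?thesis using Cons.IH[OF r] K
      by (cases "rev ru @ [b]") (auto simp: gmult_single)
  qed
qed

lemma gmult_Cons: "reduced k (a # g) \<Longrightarrow> gmult k (a # g) h = gmult k [a] (gmult k g h)"
  unfolding gmult_def[of k "a#g"] using gmult_rev_snoc[of k a "rev g" h] by (simp add: gmult_def)

lemma Kmat_ginv: "0 < k \<Longrightarrow> i < 2*k \<Longrightarrow> x < 2*k \<Longrightarrow> (\<not> Kmat k i x) \<longleftrightarrow> x = ginv k i"
  unfolding Kmat_def ginv_def
  by (cases "i < k") (auto simp: mod_if)

lemma ginv_lt: "0 < k \<Longrightarrow> ginv k i < 2*k" by (simp add: ginv_def)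

lemma ginv_ginv: "0 < k \<Longrightarrow> i < 2*k \<Longrightarrow> ginv k (ginv k i) = i"
  unfolding ginv_def by (cases "i < k") (auto simp: mod_if)

lemma ginv_inj: "0 < k \<Longrightarrow> inj_on (ginv k) {..<2*k}"
proof (rule inj_onI)
  fix x y assume k: "0 < k" and x: "x \<in> {..<2*k}" and y: "y \<in> {..<2*k}" and e: "ginv k x = ginv k y"
  then have "ginv k (ginv k x) = ginv k (ginv k y)" by simp
  then show "x = y" using ginv_ginv[OF k, of x] ginv_ginv[OF k, of y] x y by simp
qed

lemma ginv_image: "0 < k \<Longrightarrow> ginv k ` {..<2*k} = {..<2*k}"
proof
  assume k: "0 < k"
  show "ginv k ` {..<2*k} \<subseteq> {..<2*k}" using ginv_lt[OF k] by auto
  show "{..<2*k} \<subseteq> ginv k ` {..<2*k}"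
  proof
    fix x assume x: "x \<in> {..<2*k}"
    then have "x = ginv k (ginv k x)" using ginv_ginv[OF k, of x] by simp
    moreover have "ginv k x \<in> {..<2*k}" using ginv_lt[OF k] by simp
    ultimately show "x \<in> ginv k ` {..<2*k}" by blast
  qed
qed

lemma AAt_sym: "0 < k \<Longrightarrow> a < 2*k \<Longrightarrow> i < 2*k \<Longrightarrow> \<not> Kmat k a i \<Longrightarrow>
   AAt k A i x y = AAt k A a y x"
  unfolding AAt_def Kmat_def by auto

lemma mts_iff: "t \<in> markov_tree_shift k B \<longleftrightarrow>
  (\<forall>g\<in>FG k. \<forall>i<2*k. (g = [] \<or> Kmat k (last g) i) \<longrightarrow> B i (t g) (t (g @ [i])))"
  unfolding markov_tree_shift_def
  by (auto simp: gmult_gen)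

lemma FG_iff: "g \<in> FG k \<longleftrightarrow> reduced k g" by (simp add: FG_def)

lemma translate_gen:
  assumes k: "0 < k" and t: "t \<in> markov_tree_shift k (AAt k A)" and a: "a < 2*k"
  shows "(\<lambda>h. t (gmult k [a] h)) \<in> markov_tree_shift k (AAt k A)"
  unfolding mts_iff
proof (intro ballI allI impI)
  fix g i assume g: "g \<in> FG k" and i: "i < 2*k" and c: "g = [] \<or> Kmat k (last g) i"
  note T = t[unfolded mts_iff, rule_format]
  show "AAt k A i (t (gmult k [a] g)) (t (gmult k [a] (g @ [i])))"
  proof (cases g)
    case Nil
    show ?thesis
    proof (cases "Kmat k a i")
      case True
      have "[a] \<in> FG k" using a by (simp add: FG_iff reduced_Cons)
      from T[OF this i] True Nil show ?thesis by (simp add: gmult_single)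
    next
      case False
      from T[of "[]" a] a have "AAt k A a (t []) (t [a])" by (simp add: FG_iff)
      then show ?thesis using AAt_sym[OF k a i False, of A "t [a]" "t []"] False Nil by (simp add: gmult_single)
    qed
  next
    case (Cons c g')
    have g'r: "reduced k g'" "c < 2*k" "g' \<noteq> [] \<longrightarrow> Kmat k c (hd g')"
      using g Cons by (auto simp: FG_iff reduced_Cons)
    show ?thesis
    proof (cases "Kmat k a c")
      case True
      have "a # g \<in> FG k" using g a True Cons by (simp add: FG_iff reduced_Cons)
      from T[OF this i] True Cons c show ?thesis by (simp add: gmult_single)
    next
      case False
      have "g' \<in> FG k" using g'r by (simp add: FG_iff)
      from T[OF this i] False Cons c show ?thesis by (cases g') (auto simp: gmult_single)
    qed
  qed
qed

lemma translate:
  assumes k: "0 < k" and "g \<in> FG k" and "t \<in> markov_tree_shift k (AAt k A)"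
  shows "(\<lambda>h. t (gmult k g h)) \<in> markov_tree_shift k (AAt k A)"
  using assms(2,3)
proof (induction g arbitrary: t)
  case Nil then show ?case by simp
next
  case (Cons a g)
  have r: "reduced k (a # g)" using Cons.prems by (simp add: FG_iff)
  then have a: "a < 2*k" and g: "g \<in> FG k" by (auto simp: reduced_Cons FG_iff)
  have "(\<lambda>h. t (gmult k [a] h)) \<in> markov_tree_shift k (AAt k A)"
    using translate_gen[OF k Cons.prems(2) a] .
  from Cons.IH[OF g this] show ?case by (simp add: gmult_Cons[OF r])
qed

lemma glue:
  assumes t1: "t1 \<in> markov_tree_shift k B" and t2: "t2 \<in> markov_tree_shift k B"
    and e: "t1 [] = t2 []"
  shows "(\<lambda>w. if w \<noteq> [] \<and> P (hd w) then t1 w else t2 w) \<in> markov_tree_shift k B"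
  unfolding mts_iff
proof (intro ballI allI impI)
  fix g i assume g: "g \<in> FG k" and i: "i < 2*k" and c: "g = [] \<or> Kmat k (last g) i"
  note T1 = t1[unfolded mts_iff, rule_format, OF g i c]
  note T2 = t2[unfolded mts_iff, rule_format, OF g i c]
  show "B i (if g \<noteq> [] \<and> P (hd g) then t1 g else t2 g)
           (if g @ [i] \<noteq> [] \<and> P (hd (g @ [i])) then t1 (g @ [i]) else t2 (g @ [i]))"
    using T1 T2 e by (cases g) auto
qed

definition Br :: "nat \<Rightarrow> nat \<Rightarrow> nat \<Rightarrow> nat list set" where
  "Br k j n = {w \<in> FG k. w \<noteq> [] \<and> hd w = j \<and> length w \<le> Suc n}"

definition CS :: "nat \<Rightarrow> nat \<Rightarrow> nat \<Rightarrow> nat list set" where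
  "CS k i m = {w \<in> FG k. length w \<le> m \<and> (w = [] \<or> hd w \<noteq> ginv k i)}"

fun Mn :: "nat \<Rightarrow> nat \<Rightarrow> nat" where
  "Mn k 0 = 1"
| "Mn k (Suc n) = 1 + (2*k - 1) * Mn k n"

lemma DeltaBar_eq:
  assumes "0 < k" "i < 2*k"
  shows "DeltaBar k [i] n = Br k i n"
proof (intro set_eqI iffI)
  fix x assume "x \<in> DeltaBar k [i] n"
  then obtain h where h: "h \<in> FG k" "length h \<le> n" "length (gmult k [i] h) = length [i] + length h"
    and x: "x = gmult k [i] h" unfolding DeltaBar_def by blast
  show "x \<in> Br k i n"
  proof (cases h)
    case Nil then show ?thesis using x assms by (simp add: Br_def gmult_single FG_iff reduced_Cons)
  next
    case (Cons c h')
    with h have "Kmat k i c" by (auto simp: gmult_single split: if_splits)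
    then show ?thesis using x assms h Cons by (simp add: Br_def gmult_single FG_iff reduced_Cons)
  qed
next
  fix x assume "x \<in> Br k i n"
  then obtain h where x: "x = i # h" and r: "reduced k (i # h)" and l: "length h \<le> n"
    unfolding Br_def FG_iff by (cases x) auto
  then have "h \<in> FG k" "h = [] \<or> Kmat k i (hd h)" by (auto simp: FG_iff reduced_Cons)
  moreover have "gmult k [i] h = i # h" using \<open>h = [] \<or> _\<close> by (cases h) (auto simp: gmult_single)
  ultimately show "x \<in> DeltaBar k [i] n" unfolding DeltaBar_def using x l by force
qed

lemma Br_image:
  assumes "0 < k" "i < 2*k"
  shows "Br k i m = (\<lambda>w. i # w) ` CS k i m"
proof (intro set_eqI iffI)
  fix x assume "x \<in> Br k i m"
  then obtain h where x: "x = i # h" and r: "reduced k (i # h)" and l: "length h \<le> m"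
    unfolding Br_def FG_iff by (cases x) auto
  then have "h \<in> CS k i m" using assms Kmat_ginv[OF assms]
    by (cases h) (auto simp: CS_def FG_iff reduced_Cons)
  then show "x \<in> (\<lambda>w. i # w) ` CS k i m" using x by blast
next
  fix x assume "x \<in> (\<lambda>w. i # w) ` CS k i m"
  then obtain h where x: "x = i # h" and h: "h \<in> CS k i m" by blast
  then show "x \<in> Br k i m" using assms Kmat_ginv[OF assms, of "hd h"]
    by (cases h) (auto simp: CS_def Br_def FG_iff reduced_Cons)
qed

lemma hd_lt: "reduced k w \<Longrightarrow> w \<noteq> [] \<Longrightarrow> hd w < 2*k"
  by (cases w) (auto simp: reduced_Cons)

lemma hd_lt': "reduced k w \<Longrightarrow> w = [] \<or> hd w < 2*k"
  using hd_lt by blast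

lemma CS_0: "CS k i 0 = {[]}" by (auto simp: CS_def FG_iff)

lemma CS_Suc:
  assumes "0 < k" "i < 2*k"
  shows "CS k i (Suc n) = insert [] (\<Union>j\<in>{..<2*k}-{ginv k i}. Br k j n)"
  by (auto simp: CS_def Br_def FG_iff dest: hd_lt')

lemma Delta_Suc: "Delta k (Suc n) = insert [] (\<Union>j\<in>{..<2*k}. Br k j n)"
  by (auto simp: Delta_def Br_def FG_iff dest: hd_lt')

lemma Delta_0: "Delta k 0 = {[]}" by (auto simp: Delta_def FG_iff)

lemma finite_Delta: "finite (Delta k n)"
proof -
  have "Delta k n \<subseteq> {w. set w \<subseteq> {..<2*k} \<and> length w \<le> n}"
    by (auto simp: Delta_def FG_iff reduced_def)
  then show ?thesis by (rule finite_subset) (rule finite_lists_length_le, simp)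
qed

lemma Br_sub: "Br k j n \<subseteq> Delta k (Suc n)" by (auto simp: Br_def Delta_def)
lemma CS_sub: "CS k i n \<subseteq> Delta k n" by (auto simp: CS_def Delta_def)
lemma finite_Br: "finite (Br k j n)" by (rule finite_subset[OF Br_sub finite_Delta])
lemma finite_CS: "finite (CS k j n)" by (rule finite_subset[OF CS_sub finite_Delta])

lemma Br_disj: "j \<noteq> j' \<Longrightarrow> Br k j n \<inter> Br k j' n = {}" by (auto simp: Br_def)

lemma card_Br: "0 < k \<Longrightarrow> j < 2*k \<Longrightarrow> card (Br k j n) = Mn k n \<and> card (CS k j n) = Mn k n"
proof (induction n arbitrary: j)
  case 0
  then show ?case using Br_image[OF 0] by (simp add: CS_0)
next
  case (Suc n)
  have "card (CS k j (Suc n)) = Suc (card (\<Union>l\<in>{..<2*k}-{ginv k j}. Br k l n))"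
    unfolding CS_Suc[OF Suc.prems] by (rule card_insert_disjoint) (simp add: finite_Br, auto simp: Br_def)
  also have "card (\<Union>l\<in>{..<2*k}-{ginv k j}. Br k l n) = (\<Sum>l\<in>{..<2*k}-{ginv k j}. card (Br k l n))"
    by (rule card_UN_disjoint) (simp_all add: finite_Br Br_disj)
  also have "\<dots> = (\<Sum>l\<in>{..<2*k}-{ginv k j}. Mn k n)"
    using Suc.IH[OF Suc.prems(1)] by (intro sum.cong) auto
  also have "\<dots> = (2*k-1) * Mn k n" using ginv_lt[OF Suc.prems(1), of j] by simp
  finally have C: "card (CS k j (Suc n)) = Mn k (Suc n)" by simp
  moreover have "card (Br k j (Suc n)) = card (CS k j (Suc n))"
    unfolding Br_image[OF Suc.prems] by (rule card_image) (simp add: inj_on_def)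
  ultimately show ?case by simp
qed

lemma card_Delta_Suc: "0 < k \<Longrightarrow> card (Delta k (Suc n)) = 1 + 2*k * Mn k n"
proof -
  assume k: "0 < k"
  have "card (Delta k (Suc n)) = Suc (card (\<Union>l\<in>{..<2*k}. Br k l n))"
    unfolding Delta_Suc by (rule card_insert_disjoint) (simp add: finite_Br, auto simp: Br_def)
  also have "card (\<Union>l\<in>{..<2*k}. Br k l n) = (\<Sum>l\<in>{..<2*k}. card (Br k l n))"
    by (rule card_UN_disjoint) (simp_all add: finite_Br Br_disj)
  also have "\<dots> = (\<Sum>l\<in>{..<2*k}. Mn k n)"
    using card_Br[OF k] by (intro sum.cong) auto
  finally show ?thesis by simp
qed

definition Pat :: "(nat list \<Rightarrow> 'a) set \<Rightarrow> nat list set \<Rightarrow> (nat list \<Rightarrow> 'a) set" where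
  "Pat X H = {restrict t H | t. t \<in> X}"

definition Pa :: "(nat list \<Rightarrow> 'a) set \<Rightarrow> 'a \<Rightarrow> nat list set \<Rightarrow> (nat list \<Rightarrow> 'a) set" where
  "Pa X a H = {restrict t H | t. t \<in> X \<and> t [] = a}"

lemma npat_eq:
  assumes k: "0 < k" and X: "X = markov_tree_shift k (AAt k A)"
  shows "npat k X H = card (Pat X H)"
proof -
  have "{restrict (\<lambda>h. t (gmult k g h)) H | g t. g \<in> FG k \<and> t \<in> X} = Pat X H"
  proof (intro set_eqI iffI)
    fix u assume "u \<in> {restrict (\<lambda>h. t (gmult k g h)) H | g t. g \<in> FG k \<and> t \<in> X}"
    then obtain g t where "g \<in> FG k" "t \<in> X" "u = restrict (\<lambda>h. t (gmult k g h)) H" by blast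
    then show "u \<in> Pat X H" unfolding Pat_def using translate[OF k, of g t A] X by blast
  next
    fix u assume "u \<in> Pat X H"
    then obtain t where "t \<in> X" "u = restrict t H" unfolding Pat_def by blast
    moreover have "[] \<in> FG k" by (simp add: FG_iff)
    ultimately show "u \<in> {restrict (\<lambda>h. t (gmult k g h)) H | g t. g \<in> FG k \<and> t \<in> X}"
      by (intro CollectI exI[of _ "[]"] exI[of _ t]) simp
  qed
  then show ?thesis unfolding npat_def by simp
qed

lemma finite_Pat: "finite H \<Longrightarrow> finite (Pat (X :: (nat list \<Rightarrow> 'a::finite) set) H)"
proof -
  assume H: "finite H"
  have "Pat X H \<subseteq> PiE H (\<lambda>_. (UNIV :: 'a set))" unfolding Pat_def by auto
  moreover have "finite (PiE H (\<lambda>_. (UNIV :: 'a set)))" using H by (intro finite_PiE) auto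
  ultimately show ?thesis by (rule finite_subset)
qed

lemma finite_Pa: "finite H \<Longrightarrow> finite (Pa (X :: (nat list \<Rightarrow> 'a::finite) set) a H)"
proof -
  assume H: "finite H"
  have "Pa X a H \<subseteq> Pat X H" unfolding Pa_def Pat_def by auto
  then show ?thesis by (rule finite_subset) (rule finite_Pat[OF H])
qed

lemma Pat_union:
  fixes X :: "(nat list \<Rightarrow> 'a::finite) set"
  assumes "finite H1" "finite H2"
  shows "card (Pat X (H1 \<union> H2)) \<le> card (Pat X H1) * card (Pat X H2)"
proof -
  let ?f = "\<lambda>u. (restrict u H1, restrict u H2)"
  have "inj_on ?f (Pat X (H1 \<union> H2))"
  proof (rule inj_onI)
    fix u v assume "u \<in> Pat X (H1 \<union> H2)" "v \<in> Pat X (H1 \<union> H2)" "?f u = ?f v"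
    then obtain tu tv where u: "u = restrict tu (H1 \<union> H2)" and v: "v = restrict tv (H1 \<union> H2)"
      and e1: "restrict u H1 = restrict v H1" and e2: "restrict u H2 = restrict v H2"
      unfolding Pat_def by auto
    show "u = v"
    proof
      fix x
      show "u x = v x"
      proof (cases "x \<in> H1")
        case True then show ?thesis using fun_cong[OF e1, of x] by simp
      next
        case False
        show ?thesis
        proof (cases "x \<in> H2")
          case True then show ?thesis using fun_cong[OF e2, of x] by simp
        next
          case False2: False
          then show ?thesis using False u v by simp
        qed
      qed
    qed
  qed
  moreover have "?f ` Pat X (H1 \<union> H2) \<subseteq> Pat X H1 \<times> Pat X H2"
    unfolding Pat_def by auto
  moreover have "finite (Pat X H1 \<times> Pat X H2)" using assms by (intro finite_cartesian_product finite_Pat)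
  ultimately have "card (Pat X (H1 \<union> H2)) \<le> card (Pat X H1 \<times> Pat X H2)"
    by (rule card_inj_on_le)
  then show ?thesis by (simp add: card_cartesian_product)
qed

lemma Pat_empty: "card (Pat X {}) \<le> 1"
proof -
  have "Pat X {} \<subseteq> {(\<lambda>_. undefined)}" unfolding Pat_def by auto
  then have "card (Pat X {}) \<le> card {(\<lambda>_::nat list. undefined :: 'a)}" by (rule card_mono[rotated]) simp
  then show ?thesis by simp
qed

lemma Pat_UN:
  fixes X :: "(nat list \<Rightarrow> 'a::finite) set"
  assumes "finite J" "\<And>j. j \<in> J \<Longrightarrow> finite (H j)"
  shows "card (Pat X (\<Union>j\<in>J. H j)) \<le> (\<Prod>j\<in>J. card (Pat X (H j)))"
  using assms
proof (induction J rule: finite_induct)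
  case empty then show ?case using Pat_empty by simp
next
  case (insert j J)
  have "card (Pat X (\<Union>j\<in>insert j J. H j)) = card (Pat X (H j \<union> (\<Union>j\<in>J. H j)))" by simp
  also have "\<dots> \<le> card (Pat X (H j)) * card (Pat X (\<Union>j\<in>J. H j))"
    using insert by (intro Pat_union) auto
  also have "\<dots> \<le> card (Pat X (H j)) * (\<Prod>j\<in>J. card (Pat X (H j)))"
    using insert by (intro mult_le_mono2) auto
  finally show ?case using insert by simp
qed

lemma Pat_single: "card (Pat (X :: (nat list \<Rightarrow> 'a::finite) set) {w}) \<le> CARD('a)"
proof -
  have "Pat X {w} \<subseteq> (\<lambda>a. restrict (\<lambda>_. a) {w}) ` UNIV"
    unfolding Pat_def by (auto simp: restrict_def fun_eq_iff intro!: image_eqI)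
  then have "card (Pat X {w}) \<le> card ((\<lambda>a. restrict (\<lambda>_. a) {w}) ` (UNIV :: 'a set))"
    by (rule card_mono[rotated]) simp
  also have "\<dots> \<le> CARD('a)" by (rule card_image_le) simp
  finally show ?thesis .
qed

lemma Pat_insert:
  fixes X :: "(nat list \<Rightarrow> 'a::finite) set"
  assumes "finite H"
  shows "card (Pat X (insert w H)) \<le> CARD('a) * card (Pat X H)"
proof -
  have "card (Pat X ({w} \<union> H)) \<le> card (Pat X {w}) * card (Pat X H)"
    using assms by (intro Pat_union) auto
  also have "\<dots> \<le> CARD('a) * card (Pat X H)" using Pat_single by (intro mult_le_mono1)
  finally show ?thesis by simp
qed

lemma Pat_translate:
  fixes A :: "nat \<Rightarrow> 'a::finite \<Rightarrow> 'a \<Rightarrow> bool"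
  assumes k: "0 < k" and X: "X = markov_tree_shift k (AAt k A)" and i: "i < 2*k"
  shows "card (Pat X ((\<lambda>w. i # w) ` CS k i m)) \<le> card (Pat X (CS k i m))"
proof -
  let ?H = "CS k i m"
  let ?f = "\<lambda>u. restrict (\<lambda>w. u (i # w)) ?H"
  have gm: "gmult k [i] w = i # w" if "w \<in> ?H" for w
    using that Kmat_ginv[OF k i, of "hd w"]
    by (cases w) (auto simp: CS_def FG_iff reduced_Cons gmult_single)
  have "inj_on ?f (Pat X ((\<lambda>w. i # w) ` ?H))"
  proof (rule inj_onI)
    fix u v assume u: "u \<in> Pat X ((\<lambda>w. i # w) ` ?H)" and v: "v \<in> Pat X ((\<lambda>w. i # w) ` ?H)"
      and e: "?f u = ?f v"
    show "u = v"
    proof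
      fix x
      show "u x = v x"
      proof (cases "x \<in> (\<lambda>w. i # w) ` ?H")
        case True
        then obtain w where "w \<in> ?H" "x = i # w" by blast
        then show ?thesis using fun_cong[OF e, of w] by simp
      next
        case False then show ?thesis using u v unfolding Pat_def by auto
      qed
    qed
  qed
  moreover have "?f ` Pat X ((\<lambda>w. i # w) ` ?H) \<subseteq> Pat X ?H"
  proof
    fix y assume "y \<in> ?f ` Pat X ((\<lambda>w. i # w) ` ?H)"
    then obtain t where t: "t \<in> X" and y: "y = ?f (restrict t ((\<lambda>w. i # w) ` ?H))"
      unfolding Pat_def by blast
    have "y = restrict (\<lambda>w. t (gmult k [i] w)) ?H"
      using y gm by (auto simp: restrict_def fun_eq_iff)
    moreover have "(\<lambda>w. t (gmult k [i] w)) \<in> X"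
      using translate[OF k, of "[i]" t A] t X i by (simp add: FG_iff reduced_Cons)
    ultimately show "y \<in> Pat X ?H" unfolding Pat_def by blast
  qed
  moreover have "finite (Pat X ?H)" by (intro finite_Pat finite_CS)
  ultimately show ?thesis by (rule card_inj_on_le)
qed

lemma U1:
  fixes A :: "nat \<Rightarrow> 'a::finite \<Rightarrow> 'a \<Rightarrow> bool"
  assumes k: "0 < k" and X: "X = markov_tree_shift k (AAt k A)" and i: "i < 2*k"
  shows "card (Pat X (Br k i (Suc n))) \<le> CARD('a) * (\<Prod>j\<in>{..<2*k}-{ginv k i}. card (Pat X (Br k j n)))"
proof -
  have "card (Pat X (Br k i (Suc n))) \<le> card (Pat X (CS k i (Suc n)))"
    unfolding Br_image[OF k i] by (rule Pat_translate[OF k X i])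
  also have "\<dots> \<le> CARD('a) * card (Pat X (\<Union>j\<in>{..<2*k}-{ginv k i}. Br k j n))"
    unfolding CS_Suc[OF k i] by (rule Pat_insert) (auto simp: finite_Br)
  also have "\<dots> \<le> CARD('a) * (\<Prod>j\<in>{..<2*k}-{ginv k i}. card (Pat X (Br k j n)))"
    by (intro mult_le_mono2 Pat_UN) (auto simp: finite_Br)
  finally show ?thesis .
qed

lemma U2:
  fixes X :: "(nat list \<Rightarrow> 'a::finite) set"
  shows "card (Pat X (Delta k (Suc n))) \<le> CARD('a) * (\<Prod>j\<in>{..<2*k}. card (Pat X (Br k j n)))"
proof -
  have "card (Pat X (Delta k (Suc n))) \<le> CARD('a) * card (Pat X (\<Union>j\<in>{..<2*k}. Br k j n))"
    unfolding Delta_Suc by (rule Pat_insert) (auto simp: finite_Br)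
  also have "\<dots> \<le> CARD('a) * (\<Prod>j\<in>{..<2*k}. card (Pat X (Br k j n)))"
    by (intro mult_le_mono2 Pat_UN) (auto simp: finite_Br)
  finally show ?thesis .
qed

lemma Lb1:
  fixes X :: "(nat list \<Rightarrow> 'a::finite) set"
  assumes H: "finite H"
  shows "\<exists>a. card (Pat X H) \<le> CARD('a) * card (Pa X a H)"
proof (rule ccontr)
  assume "\<not> ?thesis"
  then have lt: "CARD('a) * card (Pa X a H) < card (Pat X H)" for a using not_le by blast
  have "Pat X H = (\<Union>a. Pa X a H)" unfolding Pat_def Pa_def by auto
  moreover have "card (\<Union>a. Pa X a H) \<le> (\<Sum>a\<in>UNIV. card (Pa X a H))"
    by (rule card_UN_le) simp
  ultimately have "card (Pat X H) \<le> (\<Sum>a\<in>UNIV. card (Pa X a H))" by simp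
  then have "CARD('a) * card (Pat X H) \<le> (\<Sum>a\<in>UNIV. CARD('a) * card (Pa X a H))"
    unfolding sum_distrib_left[symmetric] by (rule mult_le_mono2)
  also have "\<dots> < (\<Sum>a\<in>(UNIV::'a set). card (Pat X H))"
    by (rule sum_strict_mono) (auto simp: lt)
  also have "\<dots> = CARD('a) * card (Pat X H)" by simp
  finally show False by simp
qed

lemma glue_ineq:
  fixes A :: "nat \<Rightarrow> 'a::finite \<Rightarrow> 'a \<Rightarrow> bool" and n :: nat
  assumes k: "0 < k" and X: "X = markov_tree_shift k (AAt k A)" and i: "i < 2*k" and i': "i' < 2*k"
    and ii: "ginv k i \<noteq> ginv k i'"
  defines "W \<equiv> (\<Union>j\<in>{..<2*k}-{ginv k i, ginv k i'}. Br k j n)"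
  shows "card (Pa X a (CS k i (Suc n))) * card (Pa X a (CS k i' (Suc n)))
          \<le> card (Pat X (Delta k (Suc n))) * card (Pat X W)"
proof -
  let ?C = "CS k i (Suc n)" and ?C' = "CS k i' (Suc n)" and ?D = "Delta k (Suc n)"
  let ?g = "\<lambda>(u::nat list \<Rightarrow> 'a) (u'::nat list \<Rightarrow> 'a). (\<lambda>w. if w \<in> ?D then (if w \<noteq> [] \<and> hd w \<noteq> ginv k i then u w else u' w) else undefined)"
  let ?f = "\<lambda>(u, u'). (?g u u', restrict u' W)"
  have WC': "W \<subseteq> ?C'" unfolding W_def by (auto simp: Br_def CS_def)
  have CD: "?C \<subseteq> ?D" "?C' \<subseteq> ?D" by (auto simp: CS_def Delta_def)
  have inC: "w \<in> ?C" if "w \<in> ?D" "w \<noteq> []" "hd w \<noteq> ginv k i" for w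
    using that by (auto simp: CS_def Delta_def)
  have inC': "w \<in> ?C'" if "w \<in> ?D" "w = [] \<or> hd w = ginv k i" for w
    using that ii by (auto simp: CS_def Delta_def)
  have inW: "w \<in> W" if "w \<in> ?D" "w \<noteq> []" "hd w \<noteq> ginv k i" "hd w \<noteq> ginv k i'" for w
  proof -
    have "reduced k w" using that by (auto simp: Delta_def FG_iff)
    then have "hd w < 2*k" using that(2) by (cases w) (auto simp: reduced_Cons)
    then show ?thesis using that unfolding W_def by (auto simp: Br_def Delta_def)
  qed
  have e1: "[] \<in> ?C" "[] \<in> ?C'" by (auto simp: CS_def FG_iff)
  have inj: "inj_on ?f (Pa X a ?C \<times> Pa X a ?C')"
  proof (rule inj_onI)
    fix x y assume xm: "x \<in> Pa X a ?C \<times> Pa X a ?C'" and ym: "y \<in> Pa X a ?C \<times> Pa X a ?C'"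
      and exy: "?f x = ?f y"
    obtain u1 u1' where x: "x = (u1, u1')" by (cases x)
    obtain u2 u2' where y: "y = (u2, u2')" by (cases y)
    have m: "u1 \<in> Pa X a ?C" "u1' \<in> Pa X a ?C'" "u2 \<in> Pa X a ?C" "u2' \<in> Pa X a ?C'"
      using xm ym x y by auto
    have eq1: "?g u1 u1' = ?g u2 u2'" and eq2: "restrict u1' W = restrict u2' W"
      using exy x y by simp_all
    have a0: "u1 [] = a" "u1' [] = a" "u2 [] = a" "u2' [] = a"
      using m e1 unfolding Pa_def by auto
    have ext: "u1 w = undefined" "u2 w = undefined" if "w \<notin> ?C" for w
      using m that unfolding Pa_def by auto
    have ext': "u1' w = undefined" "u2' w = undefined" if "w \<notin> ?C'" for w
      using m that unfolding Pa_def by auto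
    have "u1 = u2"
    proof
      fix w show "u1 w = u2 w"
      proof (cases "w \<in> ?C")
        case True
        show ?thesis
        proof (cases "w = []")
          case True then show ?thesis using a0 by simp
        next
          case False
          then have "hd w \<noteq> ginv k i" using \<open>w \<in> ?C\<close> by (auto simp: CS_def)
          then show ?thesis using fun_cong[OF eq1, of w] CD \<open>w \<in> ?C\<close> False by auto
        qed
      next
        case False then show ?thesis using ext by simp
      qed
    qed
    moreover have "u1' = u2'"
    proof
      fix w show "u1' w = u2' w"
      proof (cases "w \<in> ?C'")
        case True
        show ?thesis
        proof (cases "w = []")
          case True then show ?thesis using a0 by simp
        next
          case False
          show ?thesis
          proof (cases "hd w = ginv k i")
            case True
            then show ?thesis using fun_cong[OF eq1, of w] CD \<open>w \<in> ?C'\<close> False by auto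
          next
            case False2: False
            have "hd w \<noteq> ginv k i'" using \<open>w \<in> ?C'\<close> False by (auto simp: CS_def)
            then have "w \<in> W" using inW[of w] CD \<open>w \<in> ?C'\<close> False False2 by auto
            then show ?thesis using fun_cong[OF eq2, of w] by simp
          qed
        qed
      next
        case False then show ?thesis using ext' by simp
      qed
    qed
    ultimately show "x = y" using x y by simp
  qed
  have img: "?f ` (Pa X a ?C \<times> Pa X a ?C') \<subseteq> Pat X ?D \<times> Pat X W"
  proof clarify
    fix u u' assume "u \<in> Pa X a ?C" "u' \<in> Pa X a ?C'"
    then obtain t1 t2 where t1: "t1 \<in> X" "t1 [] = a" "u = restrict t1 ?C"
      and t2: "t2 \<in> X" "t2 [] = a" "u' = restrict t2 ?C'" unfolding Pa_def by blast
    let ?t = "\<lambda>w. if w \<noteq> [] \<and> hd w \<noteq> ginv k i then t1 w else t2 w"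
    have tX: "?t \<in> X" using glue[of t1 k "AAt k A" t2 "\<lambda>c. c \<noteq> ginv k i"] t1 t2 X by simp
    have "?g u u' = restrict ?t ?D"
    proof
      fix w show "?g u u' w = restrict ?t ?D w"
        using t1(3) t2(3) inC[of w] inC'[of w] by (auto simp: restrict_def)
    qed
    then have "?g u u' \<in> Pat X ?D" using tX unfolding Pat_def by blast
    moreover have "restrict u' W = restrict t2 W" using t2(3) WC' by (auto simp: restrict_def fun_eq_iff)
    then have "restrict u' W \<in> Pat X W" using t2(1) unfolding Pat_def by blast
    ultimately show "?g u u' \<in> Pat X ?D \<and> restrict u' W \<in> Pat X W" by blast
  qed
  have finW: "finite W" unfolding W_def by (intro finite_UN_I) (auto simp: finite_Br)
  have fin: "finite (Pat X ?D \<times> Pat X W)"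
    by (intro finite_cartesian_product finite_Pat finite_Delta finW)
  have "card (Pa X a ?C \<times> Pa X a ?C') \<le> card (Pat X ?D \<times> Pat X W)"
    using card_inj_on_le[OF inj img fin] .
  then show ?thesis by (simp add: card_cartesian_product)
qed

lemma L_ineq:
  fixes A :: "nat \<Rightarrow> 'a::finite \<Rightarrow> 'a \<Rightarrow> bool"
  assumes k: "0 < k" and X: "X = markov_tree_shift k (AAt k A)" and card: "CARD('a) < 2*k"
  shows "\<exists>i i'. i < 2*k \<and> i' < 2*k \<and> ginv k i \<noteq> ginv k i' \<and>
    card (Pat X (Br k i (Suc n))) * card (Pat X (Br k i' (Suc n)))
      \<le> CARD('a)^2 * card (Pat X (Delta k (Suc n))) *
         (\<Prod>j\<in>{..<2*k}-{ginv k i, ginv k i'}. card (Pat X (Br k j n)))"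
proof -
  define f where "f i = (SOME a. card (Pat X (CS k i (Suc n))) \<le> CARD('a) * card (Pa X a (CS k i (Suc n))))" for i
  have f: "card (Pat X (CS k i (Suc n))) \<le> CARD('a) * card (Pa X (f i) (CS k i (Suc n)))" for i
    unfolding f_def by (rule someI_ex) (rule Lb1[OF finite_CS])
  have "\<not> inj_on f {..<2*k}"
  proof
    assume "inj_on f {..<2*k}"
    then have "card (f ` {..<2*k}) = 2*k" by (simp add: card_image)
    moreover have "card (f ` {..<2*k}) \<le> CARD('a)" by (rule card_mono) auto
    ultimately show False using card by simp
  qed
  then obtain i i' where ii: "i < 2*k" "i' < 2*k" "i \<noteq> i'" "f i = f i'"
    unfolding inj_on_def by auto
  have gi: "ginv k i \<noteq> ginv k i'"
  proof
    assume "ginv k i = ginv k i'"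
    then have "ginv k (ginv k i) = ginv k (ginv k i')" by simp
    then show False using ginv_ginv[OF k ii(1)] ginv_ginv[OF k ii(2)] ii(3) by simp
  qed
  define W where "W = (\<Union>j\<in>{..<2*k}-{ginv k i, ginv k i'}. Br k j n)"
  have "card (Pat X (Br k i (Suc n))) * card (Pat X (Br k i' (Suc n)))
     \<le> card (Pat X (CS k i (Suc n))) * card (Pat X (CS k i' (Suc n)))"
    unfolding Br_image[OF k ii(1)] Br_image[OF k ii(2)]
    by (intro mult_le_mono Pat_translate[OF k X] ii)
  also have "\<dots> \<le> (CARD('a) * card (Pa X (f i) (CS k i (Suc n)))) * (CARD('a) * card (Pa X (f i) (CS k i' (Suc n))))"
    using f[of i] f[of i'] ii(4) by (intro mult_le_mono) auto
  also have "\<dots> = CARD('a)^2 * (card (Pa X (f i) (CS k i (Suc n))) * card (Pa X (f i) (CS k i' (Suc n))))"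
    by (simp add: power2_eq_square algebra_simps)
  also have "\<dots> \<le> CARD('a)^2 * (card (Pat X (Delta k (Suc n))) * card (Pat X W))"
    unfolding W_def by (intro mult_le_mono2 glue_ineq[OF k X ii(1,2) gi])
  also have "\<dots> \<le> CARD('a)^2 * (card (Pat X (Delta k (Suc n))) * (\<Prod>j\<in>{..<2*k}-{ginv k i, ginv k i'}. card (Pat X (Br k j n))))"
    unfolding W_def by (intro mult_le_mono2 Pat_UN) (auto simp: finite_Br)
  finally show ?thesis using ii gi by (intro exI[of _ i] exI[of _ i']) (simp add: mult.assoc)
qed

lemma ln_prod_nat:
  fixes f :: "nat \<Rightarrow> nat"
  assumes "finite J" "\<And>j. j \<in> J \<Longrightarrow> 1 \<le> f j"
  shows "ln (real (\<Prod>j\<in>J. f j)) = (\<Sum>j\<in>J. ln (real (f j)))"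
proof -
  have "ln (\<Prod>j\<in>J. real (f j)) = (\<Sum>j\<in>J. ln (real (f j)))"
  proof (rule ln_prod[OF assms(1)])
    fix j assume "j \<in> J"
    then have "1 \<le> f j" by (rule assms(2))
    then show "real (f j) \<noteq> 0" by simp
  qed
  then show ?thesis by simp
qed

lemma prod_ge1:
  fixes f :: "nat \<Rightarrow> nat"
  assumes "\<And>j. j \<in> J \<Longrightarrow> 1 \<le> f j"
  shows "1 \<le> (\<Prod>j\<in>J. f j)"
  using assms by (rule prod_ge_1)

lemma ln_mult_nat: "1 \<le> a \<Longrightarrow> 1 \<le> b \<Longrightarrow> ln (real (a * b)) = ln (real a) + ln (real b)"
  by (simp add: ln_mult_pos)

lemma ln_le_nat: "1 \<le> a \<Longrightarrow> a \<le> b \<Longrightarrow> ln (real a) \<le> ln (real b)"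
  by simp

lemma Mn_real:
  assumes "2 \<le> k"
  shows "real (Mn k n) = ((2 * real k - 1) ^ Suc n - 1) / (2 * real k - 2)"
proof (induction n)
  case 0 then show ?case using assms by (simp add: field_simps)
next
  case (Suc n)
  have r: "real (2 * k - 1) = 2 * real k - 1" using assms by simp
  have "real (Mn k (Suc n)) = 1 + (2 * real k - 1) * real (Mn k n)" using r by simp
  also have "\<dots> = ((2 * real k - 1) ^ Suc (Suc n) - 1) / (2 * real k - 2)"
    unfolding Suc using assms by (simp add: field_simps)
  finally show ?case .
qed

lemma Mn_lim:
  assumes "2 \<le> k"
  shows "(\<lambda>n. real (Mn k n) / (real (2*k) - 1) ^ n) \<longlonglongrightarrow> (real (2*k) - 1) / (real (2*k) - 2)"
proof -
  define d where "d = real (2*k) - 1"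
  have d: "d \<ge> 3" using assms by (simp add: d_def)
  have eq: "real (Mn k n) / d ^ n = (d - inverse (d ^ n)) / (d - 1)" for n
  proof -
    have "real (Mn k n) = (d ^ Suc n - 1) / (d - 1)" using Mn_real[OF assms] by (simp add: d_def)
    also have "\<dots> = (d * d ^ n - 1) / (d - 1)" by simp
    finally have M: "real (Mn k n) / d ^ n = ((d * d ^ n - 1) / d ^ n) / (d - 1)" by simp
    have "(d * d ^ n - 1) / d ^ n = d - inverse (d ^ n)" using d by (simp add: field_simps)
    then show ?thesis using M by simp
  qed
  have "(\<lambda>n. (d - inverse (d ^ n)) / (d - 1)) \<longlonglongrightarrow> (d - 0) / (d - 1)"
    using d by (intro tendsto_intros LIMSEQ_inverse_realpow_zero) auto
  then show ?thesis using eq by (simp add: d_def)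
qed

theorem proposition4p6:
  fixes k :: nat and A :: "nat \<Rightarrow> 'a::finite \<Rightarrow> 'a \<Rightarrow> bool"
  assumes "k \<ge> 2"
    and "CARD('a) \<le> 2 * k - 1"
  defines "X \<equiv> markov_tree_shift k (AAt k A)"
  shows "\<exists>L. (\<lambda>n. ln (real (npat k X (Delta k n))) / real (card (Delta k n))) \<longlonglongrightarrow> L
           \<and> (\<forall>i<2 * k. ereal L = stem_entropy k X i)"
proof -
  have k: "0 < k" using assms(1) by simp
  have Xeq: "X = markov_tree_shift k (AAt k A)" by (simp add: X_def)
  have cardlt: "CARD('a) < 2*k" using assms(1,2) by linarith
  have np: "npat k X H = card (Pat X H)" for H by (rule npat_eq[OF k Xeq])
  have npB: "npat k X (DeltaBar k [i] n) = card (Pat X (Br k i n))" if "i < 2*k" for i n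
    using np DeltaBar_eq[OF k that] by simp
  have cB: "card (DeltaBar k [i] n) = Mn k n" if "i < 2*k" for i n
    using DeltaBar_eq[OF k that] card_Br[OF k that] by simp
  show ?thesis
  proof (cases "X = {}")
    case True
    then have "Pat X H = {}" for H by (simp add: Pat_def)
    then have np0: "npat k X H = 0" for H using np by simp
    show ?thesis
    proof (intro exI conjI allI impI)
      show "(\<lambda>n. ln (real (npat k X (Delta k n))) / real (card (Delta k n))) \<longlonglongrightarrow> 0"
        by (simp add: np0)
      fix i assume "i < 2*k"
      show "ereal 0 = stem_entropy k X i"
        unfolding stem_entropy_def by (simp add: np0 zero_ereal_def[symmetric] Limsup_const)
    qed
  next
    case False
    then obtain t0 where t0: "t0 \<in> X" by blast
    have c1: "1 \<le> card (Pat X H)" if "finite H" for H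
    proof -
      have "restrict t0 H \<in> Pat X H" using t0 by (auto simp: Pat_def)
      then have "Pat X H \<noteq> {}" by blast
      then show ?thesis using finite_Pat[OF that, of X] by (simp add: Suc_le_eq card_gt_0_iff)
    qed
    define S where "S j n = card (Pat X (Br k j n))" for j n
    define P where "P n = card (Pat X (Delta k n))" for n
    define s where "s j n = ln (real (S j n))" for j n
    define p where "p n = ln (real (P n))" for n
    define la where "la = ln (real CARD('a))"
    have S1: "1 \<le> S j n" for j n unfolding S_def by (rule c1[OF finite_Br])
    have P1: "1 \<le> P n" for n unfolding P_def by (rule c1[OF finite_Delta])
    have C1: "1 \<le> CARD('a)" by (simp add: Suc_le_eq)
    have la0: "0 \<le> la" using C1 by (simp add: la_def)
    have s0: "0 \<le> s j n" for j n using S1[of j n] by (simp add: s_def)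
    have lnprodS: "ln (real (\<Prod>j\<in>J. S j n)) = (\<Sum>j\<in>J. s j n)" if "finite J" for J n
      unfolding s_def using that S1 by (intro ln_prod_nat) auto
    have lnCP: "ln (real (C * (\<Prod>j\<in>J. S j n))) = ln (real C) + (\<Sum>j\<in>J. s j n)"
      if "finite J" "1 \<le> C" for J n C
    proof -
      have "1 \<le> (\<Prod>j\<in>J. S j n)" using S1 by (intro prod_ge1)
      then have "ln (real (C * (\<Prod>j\<in>J. S j n))) = ln (real C) + ln (real (\<Prod>j\<in>J. S j n))"
        using that(2) by (rule ln_mult_nat[rotated])
      then show ?thesis using lnprodS[OF that(1)] by simp
    qed
    have H1: "s i (Suc n) \<le> la + (\<Sum>j\<in>{..<2*k}-{ginv k i}. s j n)" if i: "i < 2*k" for i n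
    proof -
      have "S i (Suc n) \<le> CARD('a) * (\<Prod>j\<in>{..<2*k}-{ginv k i}. S j n)"
        unfolding S_def by (rule U1[OF k Xeq i])
      then have "s i (Suc n) \<le> ln (real (CARD('a) * (\<Prod>j\<in>{..<2*k}-{ginv k i}. S j n)))"
        unfolding s_def using S1 by (intro ln_le_nat) auto
      then show ?thesis using lnCP[of "{..<2*k}-{ginv k i}" "CARD('a)" n] C1 by (simp add: la_def)
    qed
    have H2: "p (Suc n) \<le> la + (\<Sum>j<2*k. s j n)" for n
    proof -
      have "P (Suc n) \<le> CARD('a) * (\<Prod>j<2*k. S j n)"
        unfolding S_def P_def by (rule U2)
      then have "p (Suc n) \<le> ln (real (CARD('a) * (\<Prod>j<2*k. S j n)))"
        unfolding p_def using P1 by (intro ln_le_nat) auto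
      then show ?thesis using lnCP[of "{..<2*k}" "CARD('a)" n] C1 by (simp add: la_def)
    qed
    have H3: "\<exists>i i'. i < 2*k \<and> i' < 2*k \<and> ginv k i \<noteq> ginv k i' \<and>
        s i (Suc n) + s i' (Suc n) \<le> 2 * la + p (Suc n) + (\<Sum>j\<in>{..<2*k}-{ginv k i, ginv k i'}. s j n)" for n
    proof -
      obtain i i' where ii: "i < 2*k" "i' < 2*k" "ginv k i \<noteq> ginv k i'"
        and le: "S i (Suc n) * S i' (Suc n) \<le> CARD('a)^2 * P (Suc n) * (\<Prod>j\<in>{..<2*k}-{ginv k i, ginv k i'}. S j n)"
        using L_ineq[OF k Xeq cardlt, of n] unfolding S_def P_def by blast
      let ?R = "{..<2*k}-{ginv k i, ginv k i'}"
      have "ln (real (S i (Suc n) * S i' (Suc n))) \<le> ln (real (CARD('a)^2 * P (Suc n) * (\<Prod>j\<in>?R. S j n)))"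
        using le S1[of i "Suc n"] S1[of i' "Suc n"] by (intro ln_le_nat) (auto simp: Suc_le_eq)
      moreover have "ln (real (S i (Suc n) * S i' (Suc n))) = s i (Suc n) + s i' (Suc n)"
        using S1[of i "Suc n"] S1[of i' "Suc n"] by (simp add: s_def ln_mult_pos)
      moreover have "1 \<le> CARD('a)^2 * P (Suc n)" using C1 P1[of "Suc n"] by (simp add: Suc_le_eq)
      then have "ln (real (CARD('a)^2 * P (Suc n) * (\<Prod>j\<in>?R. S j n))) = ln (real (CARD('a)^2 * P (Suc n))) + (\<Sum>j\<in>?R. s j n)"
        by (intro lnCP) auto
      moreover have "ln (real (CARD('a)^2 * P (Suc n))) = 2 * la + p (Suc n)"
        using C1 P1[of "Suc n"] by (simp add: la_def p_def ln_mult_pos ln_realpow)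
      ultimately show ?thesis using ii by (intro exI[of _ i] exI[of _ i']) auto
    qed
    have K3: "2*k \<ge> (3::nat)" using assms(1) by simp
    have "\<exists>\<beta>. \<forall>i<2*k. (\<lambda>n. s i n / (real (2*k) - 1) ^ n) \<longlonglongrightarrow> \<beta>"
    proof (rule stems_conv[OF K3, of "ginv k" la s])
      show "\<And>i. i < 2 * k \<Longrightarrow> ginv k i < 2 * k" by (rule ginv_lt[OF k])
      show "\<And>i. i < 2 * k \<Longrightarrow> ginv k (ginv k i) = i" by (rule ginv_ginv[OF k])
      show "0 \<le> la" by (rule la0)
      show "\<And>j n. j < 2 * k \<Longrightarrow> 0 \<le> s j n" by (rule s0)
      show "\<And>i n. i < 2 * k \<Longrightarrow> s i (Suc n) \<le> la + (\<Sum>j\<in>{..<2 * k} - {ginv k i}. s j n)" by (rule H1)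
    qed
    then obtain \<beta> where st: "\<And>i. i < 2*k \<Longrightarrow> (\<lambda>n. s i n / (real (2*k) - 1) ^ n) \<longlonglongrightarrow> \<beta>"
      by blast
    have ball: "(\<lambda>n. p (Suc n) / (real (2*k) - 1) ^ n) \<longlonglongrightarrow> real (2*k) * \<beta>"
    proof (rule ball_conv[OF K3, of "ginv k" s \<beta> p la])
      show "\<And>i. i < 2 * k \<Longrightarrow> ginv k i < 2 * k" by (rule ginv_lt[OF k])
      show "\<And>i. i < 2 * k \<Longrightarrow> (\<lambda>n. s i n / (real (2 * k) - 1) ^ n) \<longlonglongrightarrow> \<beta>" by (rule st)
      show "\<And>n. p (Suc n) \<le> la + (\<Sum>j<2 * k. s j n)" by (rule H2)
      show "\<And>n. \<exists>i i'. i < 2 * k \<and> i' < 2 * k \<and> ginv k i \<noteq> ginv k i' \<and>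
        s i (Suc n) + s i' (Suc n) \<le> 2 * la + p (Suc n) + (\<Sum>j\<in>{..<2 * k} - {ginv k i, ginv k i'}. s j n)"
        by (rule H3)
    qed
    define d where "d = real (2*k) - 1"
    have d3: "d \<ge> 3" using assms(1) by (simp add: d_def)
    define L where "L = \<beta> * (d - 1) / d"
    have Mlim: "(\<lambda>n. real (Mn k n) / d ^ n) \<longlonglongrightarrow> d / (d - 1)"
      using Mn_lim[OF assms(1)] by (simp add: d_def)
    have dpos: "0 < d ^ n" for n using d3 by simp
    show ?thesis
    proof (intro exI conjI allI impI)
      have Nlim: "(\<lambda>n. real (card (Delta k (Suc n))) / d ^ n) \<longlonglongrightarrow> 0 + real (2*k) * (d / (d - 1))"
      proof -
        have "(\<lambda>n. inverse (d ^ n) + real (2*k) * (real (Mn k n) / d ^ n)) \<longlonglongrightarrow> 0 + real (2*k) * (d / (d - 1))"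
          using d3 by (intro tendsto_intros LIMSEQ_inverse_realpow_zero Mlim) auto
        moreover have "real (card (Delta k (Suc n))) / d ^ n = inverse (d ^ n) + real (2*k) * (real (Mn k n) / d ^ n)" for n
          using card_Delta_Suc[OF k, of n] dpos[of n] by (simp add: field_simps add_divide_distrib)
        ultimately show ?thesis by simp
      qed
      have lim1: "(\<lambda>n. (p (Suc n) / d ^ n) / (real (card (Delta k (Suc n))) / d ^ n)) \<longlonglongrightarrow> (real (2*k) * \<beta>) / (0 + real (2*k) * (d / (d - 1)))"
        using ball Nlim d3 k by (intro tendsto_divide) (auto simp: d_def)
      have eqL: "(real (2*k) * \<beta>) / (0 + real (2*k) * (d / (d - 1))) = L"
        using d3 k by (simp add: L_def field_simps)
      have eqn: "(p (Suc n) / d ^ n) / (real (card (Delta k (Suc n))) / d ^ n) = ln (real (npat k X (Delta k (Suc n)))) / real (card (Delta k (Suc n)))" for n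
        using dpos[of n] d3 by (simp add: p_def P_def np)
      have fe: "(\<lambda>n. (p (Suc n) / d ^ n) / (real (card (Delta k (Suc n))) / d ^ n)) = (\<lambda>n. ln (real (npat k X (Delta k (Suc n)))) / real (card (Delta k (Suc n))))"
        by (rule ext) (rule eqn)
      have "(\<lambda>n. ln (real (npat k X (Delta k (Suc n)))) / real (card (Delta k (Suc n)))) \<longlonglongrightarrow> L"
        using lim1 unfolding fe eqL .
      then show "(\<lambda>n. ln (real (npat k X (Delta k n))) / real (card (Delta k n))) \<longlonglongrightarrow> L"
        by (rule LIMSEQ_imp_Suc)
      fix i assume i: "i < 2*k"
      have lim2: "(\<lambda>n. (s i n / d ^ n) / (real (Mn k n) / d ^ n)) \<longlonglongrightarrow> \<beta> / (d / (d - 1))"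
      proof (rule tendsto_divide[OF _ Mlim])
        show "(\<lambda>n. s i n / d ^ n) \<longlonglongrightarrow> \<beta>" using st[OF i] by (simp add: d_def)
        show "d / (d - 1) \<noteq> 0" using d3 by simp
      qed
      have eqL2: "\<beta> / (d / (d - 1)) = L" using d3 by (simp add: L_def field_simps)
      have eqn2: "(s i n / d ^ n) / (real (Mn k n) / d ^ n) = ln (real (npat k X (DeltaBar k [i] n))) / real (card (DeltaBar k [i] n))" for n
        using dpos[of n] d3 by (simp add: s_def S_def npB[OF i] cB[OF i])
      have fe2: "(\<lambda>n. (s i n / d ^ n) / (real (Mn k n) / d ^ n)) = (\<lambda>n. ln (real (npat k X (DeltaBar k [i] n))) / real (card (DeltaBar k [i] n)))"
        by (rule ext) (rule eqn2)
      have conv: "(\<lambda>n. ln (real (npat k X (DeltaBar k [i] n))) / real (card (DeltaBar k [i] n))) \<longlonglongrightarrow> L"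
        using lim2 unfolding fe2 eqL2 .
      show "ereal L = stem_entropy k X i"
        unfolding stem_entropy_def
        by (rule lim_imp_Limsup[symmetric]) (auto intro: tendsto_ereal conv)
    qed
  qed
qed

end
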